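(* For each $i\in E$, the torus-invariant divisors $\widetilde y_j$, $j\in\pi^{-1}(i)$, all have the same class in $A^1(X_{\mathbf a})$; denote it $y_i$. Moreover, $$A^\bullet(X_{\mathbf a})=\frac{\mathbb Z[x_S,y_i:\emptyset\subseteq S\subsetneq E,\ i\in E]}{\langle x_{S_1}x_{S_2}:S_1,S_2\text{ incomparable}\rangle+\langle x_Sy_i^{a_i}:i\notin S\rangle+\langle y_i-\sum_{S\not\ni i}x_S:i\in E\rangle}.$$
   Context: $E=\{1,\dots,m\}$, $\mathbf a\in\mathbb Z^m_{\ge0}$, $n=\sum a_i$, $\widetilde E$ an $n$-element set, $\pi:\widetilde E\to E$ with $|\pi^{-1}(i)|=a_i$, $\mathbf e_U=\sum_{j\in U}\mathbf e_j$. The polystellahedral fan $\Sigma_{\mathbf a}\subset\mathbb R^{\widetilde E}$ has cones $\operatorname{cone}(-\mathbf e_{\widetilde E\setminus\pi^{-1}(F_1)},\dots,-\mathbf e_{\widetilde E\setminus\pi^{-1}(F_k)},\mathbf e_j:j\in I)$ for $I\subseteq\widetilde E$ and chains $F_1\subsetneq\dots\subsetneq F_k\subsetneq F_{k+1}=E$ ($k\ge0$) with $\pi^{-1}(A)\subseteq I\Rightarrow A\subseteq F_1$; $X_{\mathbf a}$ its smooth projective toric variety. Its rays are $\rho_j=\mathbb R_{\ge0}\mathbf e_j$ ($j\in\widetilde E$), with divisor $\widetilde y_j$, and $\rho_S=\mathbb R_{\ge0}(-\mathbf e_{\widetilde E\setminus\pi^{-1}(S)})$ ($\emptyset\subseteq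 S\subsetneq E$), with divisor class $x_S$. *)

theory Defs
  imports "HOL-Library.Poly_Mapping" "HOL-Algebra.QuotRing" "HOL-Algebra.RingHom"
begin

type_synonym 'v mpoly = "('v \<Rightarrow>\<^sub>0 nat) \<Rightarrow>\<^sub>0 int"

definition mvar :: "'v \<Rightarrow> 'v mpoly" where
  "mvar v = Poly_Mapping.single (Poly_Mapping.single v 1) 1"

definition mpoly_ring :: "'v set \<Rightarrow> 'v mpoly ring" where
  "mpoly_ring V = \<lparr>carrier = {p :: 'v mpoly. \<forall>\<mu>\<in>Poly_Mapping.keys p. Poly_Mapping.keys \<mu> \<subseteq> V},
                   mult = (*), one = 1, zero = 0, add = (+)\<rparr>"

definition cls :: "('a, 'b) ring_scheme \<Rightarrow> 'a set \<Rightarrow> 'a \<Rightarrow> 'a set" where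
  "cls R I p = a_r_coset R I p"

text \<open>Ray labels: \<open>RS S\<close> is the ray rho_S (S a proper subset of E), \<open>RE j\<close> the ray rho_j (j in E~).\<close>
datatype 'e ray = RS "nat set" | RE 'e

definition groundE :: "nat \<Rightarrow> nat set" where
  "groundE m = {1..m}"

definition rays :: "nat \<Rightarrow> 'e set \<Rightarrow> 'e ray set" where
  "rays m Et = RS ` {S. S \<subset> groundE m} \<union> RE ` Et"

text \<open>A set of rays spans a cone of Sigma_a iff it is of the form
  {rho_F1,...,rho_Fk} \<union> {rho_j : j in I} with I \<subseteq> E~, F1 \<subset> ... \<subset> Fk \<subset> E a chain
  (k \<ge> 0, F_{k+1} = E), such that pi^{-1}(A) \<subseteq> I implies A \<subseteq> F1 for all A \<subseteq> E.\<close>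
definition is_cone :: "nat \<Rightarrow> 'e set \<Rightarrow> ('e \<Rightarrow> nat) \<Rightarrow> 'e ray set \<Rightarrow> bool" where
  "is_cone m Et \<pi> \<sigma> \<longleftrightarrow>
     (\<exists>I \<F>. I \<subseteq> Et \<and> (\<forall>F\<in>\<F>. F \<subset> groundE m) \<and>
        (\<forall>F\<in>\<F>. \<forall>G\<in>\<F>. F \<subseteq> G \<or> G \<subseteq> F) \<and>
        \<sigma> = RS ` \<F> \<union> RE ` I \<and>
        (\<forall>A. A \<subseteq> groundE m \<longrightarrow> {j\<in>Et. \<pi> j \<in> A} \<subseteq> I \<longrightarrow>
              A \<subseteq> (if \<F> = {} then groundE m else \<Inter>\<F>)))"

definition SR_gens :: "nat \<Rightarrow> 'e set \<Rightarrow> ('e \<Rightarrow> nat) \<Rightarrow> 'e ray mpoly set" where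
  "SR_gens m Et \<pi> = {prod mvar \<sigma> | \<sigma>. \<sigma> \<subseteq> rays m Et \<and> \<not> is_cone m Et \<pi> \<sigma>}"

text \<open>Linear relations: for each coordinate functional e_k^* (k in E~),
  sum over rays rho of <e_k, v_rho> [D_rho], where v_{rho_j} = e_j and
  v_{rho_S} = - e_{E~ \ pi^{-1}(S)}.\<close>
definition lin_gens :: "nat \<Rightarrow> 'e set \<Rightarrow> ('e \<Rightarrow> nat) \<Rightarrow> 'e ray mpoly set" where
  "lin_gens m Et \<pi> = {mvar (RE k) - (\<Sum>S\<in>{S. S \<subset> groundE m \<and> \<pi> k \<notin> S}. mvar (RS S)) | k. k \<in> Et}"

definition chow_poly :: "nat \<Rightarrow> 'e set \<Rightarrow> 'e ray mpoly ring" where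
  "chow_poly m Et = mpoly_ring (rays m Et)"

definition chow_ideal :: "nat \<Rightarrow> 'e set \<Rightarrow> ('e \<Rightarrow> nat) \<Rightarrow> 'e ray mpoly set" where
  "chow_ideal m Et \<pi> = genideal (chow_poly m Et) (SR_gens m Et \<pi> \<union> lin_gens m Et \<pi>)"

text \<open>Chow ring A^*(X_a) via the Danilov--Jurkiewicz presentation.\<close>
definition chow_ring :: "nat \<Rightarrow> 'e set \<Rightarrow> ('e \<Rightarrow> nat) \<Rightarrow> 'e ray mpoly set ring" where
  "chow_ring m Et \<pi> = chow_poly m Et Quot chow_ideal m Et \<pi>"

datatype gen = GX "nat set" | GY nat

definition pres_vars :: "nat \<Rightarrow> gen set" where
  "pres_vars m = GX ` {S. S \<subset> groundE m} \<union> GY ` groundE m"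

definition pres_poly :: "nat \<Rightarrow> gen mpoly ring" where
  "pres_poly m = mpoly_ring (pres_vars m)"

definition pres_gens :: "nat \<Rightarrow> (nat \<Rightarrow> nat) \<Rightarrow> gen mpoly set" where
  "pres_gens m a =
     {mvar (GX S1) * mvar (GX S2) | S1 S2. S1 \<subset> groundE m \<and> S2 \<subset> groundE m
                                        \<and> \<not> S1 \<subseteq> S2 \<and> \<not> S2 \<subseteq> S1}
   \<union> {mvar (GX S) * mvar (GY i) ^ a i | S i. S \<subset> groundE m \<and> i \<in> groundE m \<and> i \<notin> S}
   \<union> {mvar (GY i) - (\<Sum>S\<in>{S. S \<subset> groundE m \<and> i \<notin> S}. mvar (GX S)) | i. i \<in> groundE m}"

definition pres_ideal :: "nat \<Rightarrow> (nat \<Rightarrow> nat) \<Rightarrow> gen mpoly set" where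
  "pres_ideal m a = genideal (pres_poly m) (pres_gens m a)"

definition pres_ring :: "nat \<Rightarrow> (nat \<Rightarrow> nat) \<Rightarrow> gen mpoly set ring" where
  "pres_ring m a = pres_poly m Quot pres_ideal m a"

end

theory Submission
  imports Defs
begin


definition Cv :: "'v set \<Rightarrow> 'v mpoly set" where
  "Cv V = {p :: 'v mpoly. \<forall>\<mu>\<in>Poly_Mapping.keys p. Poly_Mapping.keys \<mu> \<subseteq> V}"

lemma carrier_mpoly_ring: "carrier (mpoly_ring V) = Cv V"
  and mult_mpoly_ring[simp]: "mult (mpoly_ring V) = (*)"
  and add_mpoly_ring[simp]: "add (mpoly_ring V) = (+)"
  and one_mpoly_ring[simp]: "one (mpoly_ring V) = 1"
  and zero_mpoly_ring[simp]: "zero (mpoly_ring V) = 0"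
  by (simp_all add: mpoly_ring_def Cv_def)

lemma mem_Cv: "p \<in> Cv V \<longleftrightarrow> (\<forall>\<mu>\<in>Poly_Mapping.keys p. Poly_Mapping.keys \<mu> \<subseteq> V)"
  by (simp add: Cv_def)

lemma Cv_0[simp]: "0 \<in> Cv V" by (simp add: mem_Cv)
lemma Cv_1[simp]: "1 \<in> Cv V" by (simp add: mem_Cv)
lemma Cv_add[simp]: "p \<in> Cv V \<Longrightarrow> q \<in> Cv V \<Longrightarrow> p + q \<in> Cv V"
  using keys_add[of p q] unfolding mem_Cv by blast
lemma Cv_uminus[simp]: "p \<in> Cv V \<Longrightarrow> - p \<in> Cv V"
  by (simp add: mem_Cv)
lemma Cv_diff[simp]: "p \<in> Cv V \<Longrightarrow> q \<in> Cv V \<Longrightarrow> p - q \<in> Cv V"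
  using keys_diff[of p q] unfolding mem_Cv by blast
lemma keys_add_nat: "Poly_Mapping.keys ((\<mu>::'v \<Rightarrow>\<^sub>0 nat) + \<nu>) = Poly_Mapping.keys \<mu> \<union> Poly_Mapping.keys \<nu>"
  by (auto simp: in_keys_iff lookup_add)
lemma Cv_mult[simp]: "p \<in> Cv V \<Longrightarrow> q \<in> Cv V \<Longrightarrow> p * q \<in> Cv V"
  using keys_mult[of p q] unfolding mem_Cv by (force simp: keys_add_nat)
lemma Cv_mvar[simp]: "v \<in> V \<Longrightarrow> mvar v \<in> Cv V"
  by (simp add: mvar_def mem_Cv)
lemma Cv_sum[simp]: "(\<And>x. x \<in> A \<Longrightarrow> f x \<in> Cv V) \<Longrightarrow> sum f A \<in> Cv V"
  by (induction A rule: infinite_finite_induct) auto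
lemma Cv_prod[simp]: "(\<And>x. x \<in> A \<Longrightarrow> f x \<in> Cv V) \<Longrightarrow> prod f A \<in> Cv V"
  by (induction A rule: infinite_finite_induct) auto
lemma Cv_power[simp]: "p \<in> Cv V \<Longrightarrow> p ^ n \<in> Cv V"
  by (induction n) auto

lemma cring_mpoly_ring: "cring (mpoly_ring V)"
proof (rule cringI)
  show "abelian_group (mpoly_ring V)"
    by (rule abelian_groupI) (auto simp: carrier_mpoly_ring intro!: bexI[of _ "- _"])
  show "comm_monoid (mpoly_ring V)"
    by (rule comm_monoidI) (auto simp: carrier_mpoly_ring mult.assoc mult.commute)
qed (simp add: carrier_mpoly_ring distrib_right)

lemma a_inv_mpoly_ring[simp]: "p \<in> Cv V \<Longrightarrow> a_inv (mpoly_ring V) p = - p"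
proof -
  interpret cring "mpoly_ring V" by (rule cring_mpoly_ring)
  assume "p \<in> Cv V"
  then show ?thesis
    by (intro minus_equality) (auto simp: carrier_mpoly_ring)
qed

lemma a_minus_mpoly_ring[simp]: "p \<in> Cv V \<Longrightarrow> q \<in> Cv V \<Longrightarrow> a_minus (mpoly_ring V) p q = p - q"
  by (simp add: a_minus_def)

lemma mvar_pow: "mvar v ^ k = Poly_Mapping.single (Poly_Mapping.single v k) 1"
proof (induction k)
  case (Suc k)
  have "Poly_Mapping.single v 1 + Poly_Mapping.single v k = Poly_Mapping.single v (Suc k)"
    by (simp only: single_add[symmetric]) simp
  then show ?case using Suc by (simp add: mvar_def mult_single)
qed (simp add: mvar_def)

lemma prod_singles: "finite A \<Longrightarrow>
  (\<Prod>x\<in>A. Poly_Mapping.single (f x) (1::int)) = Poly_Mapping.single (\<Sum>x\<in>A. f x) 1"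
  by (induction A rule: finite_induct) (simp_all add: mult_single)

lemma mmonomial_expand: "(\<Sum>v\<in>Poly_Mapping.keys \<mu>. Poly_Mapping.single v (Poly_Mapping.lookup \<mu> v)) = \<mu>"
  by (rule poly_mapping_eqI) (auto simp: lookup_sum lookup_single when_def in_keys_iff)

lemma frag_of_prod: "frag_of \<mu> = (\<Prod>v\<in>Poly_Mapping.keys \<mu>. mvar v ^ Poly_Mapping.lookup \<mu> v)"
  by (simp add: mvar_pow prod_singles mmonomial_expand)

lemma mpoly_induct[consumes 1, case_names zero one var diff mult]:
  fixes V :: "'v set"
  assumes p: "p \<in> Cv V"
    and P0: "P 0" and P1: "P 1" and Pv: "\<And>v. v \<in> V \<Longrightarrow> P (mvar v)"
    and Pd: "\<And>p q. p \<in> Cv V \<Longrightarrow> q \<in> Cv V \<Longrightarrow> P p \<Longrightarrow> P q \<Longrightarrow> P (p - q)"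
    and Pm: "\<And>p q. p \<in> Cv V \<Longrightarrow> q \<in> Cv V \<Longrightarrow> P p \<Longrightarrow> P q \<Longrightarrow> P (p * q)"
  shows "P p"
proof -
  have pw: "q \<in> Cv V \<and> P q \<Longrightarrow> q ^ n \<in> Cv V \<and> P (q ^ n)" for q n
    by (induction n) (auto simp: P1 Pm)
  have pr: "(\<And>x. x \<in> A \<Longrightarrow> f x \<in> Cv V \<and> P (f x)) \<Longrightarrow> prod f A \<in> Cv V \<and> P (prod f A)" for f and A :: "'x set"
    by (induction A rule: infinite_finite_induct) (auto simp: P1 Pm)
  have "p \<in> Cv V \<and> P p"
  proof (rule frag_induction[of p "{\<mu>. Poly_Mapping.keys \<mu> \<subseteq> V}"])
    show "Poly_Mapping.keys p \<subseteq> {\<mu>. Poly_Mapping.keys \<mu> \<subseteq> V}" using p by (auto simp: mem_Cv)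
    show "0 \<in> Cv V \<and> P 0" using P0 by simp
    fix \<mu> :: "'v \<Rightarrow>\<^sub>0 nat" assume "\<mu> \<in> {\<mu>. Poly_Mapping.keys \<mu> \<subseteq> V}"
    then show "frag_of \<mu> \<in> Cv V \<and> P (frag_of \<mu>)"
      unfolding frag_of_prod by (intro pr pw) (auto simp: Pv)
  next
    fix a b assume "a \<in> Cv V \<and> P a" "b \<in> Cv V \<and> P b"
    then show "a - b \<in> Cv V \<and> P (a - b)" by (auto simp: Pd)
  qed
  then show ?thesis by simp
qed

definition mmono :: "('v \<Rightarrow> 'w mpoly) \<Rightarrow> ('v \<Rightarrow>\<^sub>0 nat) \<Rightarrow> 'w mpoly" where
  "mmono \<sigma> \<mu> = (\<Prod>v\<in>Poly_Mapping.keys \<mu>. \<sigma> v ^ Poly_Mapping.lookup \<mu> v)"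

definition subst :: "('v \<Rightarrow> 'w mpoly) \<Rightarrow> 'v mpoly \<Rightarrow> 'w mpoly" where
  "subst \<sigma> p = frag_extend (mmono \<sigma>) p"

lemma mono_superset: "finite K \<Longrightarrow> Poly_Mapping.keys \<mu> \<subseteq> K \<Longrightarrow>
   mmono \<sigma> \<mu> = (\<Prod>v\<in>K. \<sigma> v ^ Poly_Mapping.lookup \<mu> v)"
  unfolding mmono_def by (rule prod.mono_neutral_left) (auto simp: in_keys_iff)

lemma mono_add: "mmono \<sigma> (\<mu> + \<nu>) = mmono \<sigma> \<mu> * mmono \<sigma> \<nu>"
proof -
  let ?K = "Poly_Mapping.keys \<mu> \<union> Poly_Mapping.keys \<nu>"
  have "mmono \<sigma> (\<mu> + \<nu>) = (\<Prod>v\<in>?K. \<sigma> v ^ Poly_Mapping.lookup (\<mu> + \<nu>) v)"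
    by (rule mono_superset) (auto simp: keys_add_nat)
  also have "\<dots> = (\<Prod>v\<in>?K. \<sigma> v ^ Poly_Mapping.lookup \<mu> v) * (\<Prod>v\<in>?K. \<sigma> v ^ Poly_Mapping.lookup \<nu> v)"
    by (simp add: lookup_add power_add prod.distrib)
  also have "\<dots> = mmono \<sigma> \<mu> * mmono \<sigma> \<nu>"
    by (simp add: mono_superset[symmetric])
  finally show ?thesis .
qed

lemma mono_zero[simp]: "mmono \<sigma> 0 = 1" by (simp add: mmono_def)

lemma subst_0[simp]: "subst \<sigma> 0 = 0" by (simp add: subst_def)
lemma subst_add[simp]: "subst \<sigma> (p + q) = subst \<sigma> p + subst \<sigma> q"
  by (simp add: subst_def frag_extend_add)
lemma subst_diff[simp]: "subst \<sigma> (p - q) = subst \<sigma> p - subst \<sigma> q"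
  by (simp add: subst_def frag_extend_diff)
lemma subst_uminus[simp]: "subst \<sigma> (- p) = - subst \<sigma> p"
  by (simp add: subst_def frag_extend_minus)
lemma subst_1[simp]: "subst \<sigma> 1 = 1"
proof -
  have "(1 :: 'a mpoly) = frag_of 0" by simp
  then have "subst \<sigma> 1 = subst \<sigma> (frag_of 0)" by simp
  also have "\<dots> = mmono \<sigma> 0" by (simp only: subst_def frag_extend_of)
  finally show ?thesis by simp
qed
lemma subst_mvar[simp]: "subst \<sigma> (mvar v) = \<sigma> v"
  by (simp add: subst_def mvar_def mmono_def)
lemma subst_frag_mult: "subst \<sigma> (frag_of \<mu> * q) = subst \<sigma> (frag_of \<mu>) * subst \<sigma> q"
  using subset_UNIV[of "Poly_Mapping.keys q"]
proof (induction q rule: frag_induction)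
  case (one \<nu>)
  then show ?case by (simp add: mult_single subst_def mono_add)
qed (auto simp: right_diff_distrib)
lemma subst_mult[simp]: "subst \<sigma> (p * q) = subst \<sigma> p * subst \<sigma> q"
  using subset_UNIV[of "Poly_Mapping.keys p"]
proof (induction p rule: frag_induction)
  case (one \<mu>)
  show ?case by (rule subst_frag_mult)
qed (auto simp: left_diff_distrib)
lemma subst_sum[simp]: "subst \<sigma> (sum f A) = (\<Sum>x\<in>A. subst \<sigma> (f x))"
  by (induction A rule: infinite_finite_induct) auto
lemma subst_prod[simp]: "subst \<sigma> (prod f A) = (\<Prod>x\<in>A. subst \<sigma> (f x))"
  by (induction A rule: infinite_finite_induct) auto
lemma subst_power[simp]: "subst \<sigma> (p ^ n) = subst \<sigma> p ^ n"
  by (induction n) auto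

lemma subst_Cv:
  assumes "\<And>v. v \<in> V \<Longrightarrow> \<sigma> v \<in> Cv W" and "p \<in> Cv V"
  shows "subst \<sigma> p \<in> Cv W"
  using assms(2) by (induction p rule: mpoly_induct) (auto simp: assms(1))

lemma hom_comp_subst:
  assumes R: "ring R" and h: "h \<in> ring_hom (mpoly_ring W) R"
    and \<sigma>: "\<And>v. v \<in> V \<Longrightarrow> \<sigma> v \<in> Cv W"
  shows "(\<lambda>p. h (subst \<sigma> p)) \<in> ring_hom (mpoly_ring V) R"
proof (rule ring_hom_memI)
  fix x assume "x \<in> carrier (mpoly_ring V)"
  then have "subst \<sigma> x \<in> carrier (mpoly_ring W)"
    using subst_Cv[OF \<sigma>] by (simp add: carrier_mpoly_ring)
  then show "h (subst \<sigma> x) \<in> carrier R" using ring_hom_closed[OF h] by blast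
next
  fix x y assume xy: "x \<in> carrier (mpoly_ring V)" "y \<in> carrier (mpoly_ring V)"
  then have "subst \<sigma> x \<in> carrier (mpoly_ring W)" "subst \<sigma> y \<in> carrier (mpoly_ring W)"
    using subst_Cv[OF \<sigma>] by (simp_all add: carrier_mpoly_ring)
  then show "h (subst \<sigma> (x \<otimes>\<^bsub>mpoly_ring V\<^esub> y)) = h (subst \<sigma> x) \<otimes>\<^bsub>R\<^esub> h (subst \<sigma> y)"
    and "h (subst \<sigma> (x \<oplus>\<^bsub>mpoly_ring V\<^esub> y)) = h (subst \<sigma> x) \<oplus>\<^bsub>R\<^esub> h (subst \<sigma> y)"
    using ring_hom_mult[OF h] ring_hom_add[OF h] by auto
next
  show "h (subst \<sigma> \<one>\<^bsub>mpoly_ring V\<^esub>) = \<one>\<^bsub>R\<^esub>"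
    using ring_hom_one[OF h] by simp
qed

lemma hom_unique:
  assumes R: "cring R" and h1: "h1 \<in> ring_hom (mpoly_ring V) R" and h2: "h2 \<in> ring_hom (mpoly_ring V) R"
    and eq: "\<And>v. v \<in> V \<Longrightarrow> h1 (mvar v) = h2 (mvar v)"
    and p: "p \<in> Cv V"
  shows "h1 p = h2 p"
proof -
  interpret H1: ring_hom_cring "mpoly_ring V" R h1
    by (intro ring_hom_cring.intro ring_hom_cring_axioms.intro cring_mpoly_ring R h1)
  interpret H2: ring_hom_cring "mpoly_ring V" R h2
    by (intro ring_hom_cring.intro ring_hom_cring_axioms.intro cring_mpoly_ring R h2)
  show ?thesis using p
  proof (induction p rule: mpoly_induct)
    case zero
    then show ?case using H1.hom_zero H2.hom_zero by simp
  next
    case one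
    then show ?case using H1.hom_one H2.hom_one by simp
  next
    case (var v)
    then show ?case by (rule eq)
  next
    case (diff p q)
    have c: "p \<in> carrier (mpoly_ring V)" "q \<in> carrier (mpoly_ring V)"
      using diff by (simp_all add: carrier_mpoly_ring)
    have e: "p - q = p \<oplus>\<^bsub>mpoly_ring V\<^esub> (\<ominus>\<^bsub>mpoly_ring V\<^esub> q)" using diff by simp
    have "h1 (p \<oplus>\<^bsub>mpoly_ring V\<^esub> (\<ominus>\<^bsub>mpoly_ring V\<^esub> q)) = h2 (p \<oplus>\<^bsub>mpoly_ring V\<^esub> (\<ominus>\<^bsub>mpoly_ring V\<^esub> q))"
      using c diff(3,4) by (simp del: a_inv_mpoly_ring add_mpoly_ring add: H1.hom_add H2.hom_add)
    then show ?case by (simp only: e[symmetric])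
  next
    case (mult p q)
    then show ?case using H1.hom_mult H2.hom_mult by (simp add: carrier_mpoly_ring)
  qed
qed

section \<open>Ideals in mpoly rings\<close>

context
  fixes I :: "'v mpoly set" and V :: "'v set"
  assumes idl: "ideal I (mpoly_ring V)"
begin

interpretation ideal I "mpoly_ring V" by (rule idl)

lemma idl_sub: "I \<subseteq> Cv V"
  using a_subset by (simp add: carrier_mpoly_ring)

lemma idl_0: "0 \<in> I"
  using additive_subgroup.zero_closed[OF ideal.axioms(1)[OF idl]] by simp

lemma idl_add: "x \<in> I \<Longrightarrow> y \<in> I \<Longrightarrow> x + y \<in> I"
  using additive_subgroup.a_closed[OF ideal.axioms(1)[OF idl], of x y] by simp

lemma idl_uminus: "x \<in> I \<Longrightarrow> - x \<in> I"
proof -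
  assume x: "x \<in> I"
  then have "x \<in> Cv V" using idl_sub by blast
  then show ?thesis using additive_subgroup.a_inv_closed[OF ideal.axioms(1)[OF idl] x] by simp
qed

lemma idl_diff: "x \<in> I \<Longrightarrow> y \<in> I \<Longrightarrow> x - y \<in> I"
proof -
  assume "x \<in> I" "y \<in> I"
  then have "x + - y \<in> I" using idl_add idl_uminus by blast
  then show ?thesis by simp
qed

lemma idl_lmult: "x \<in> I \<Longrightarrow> r \<in> Cv V \<Longrightarrow> r * x \<in> I"
  using I_l_closed by (simp add: carrier_mpoly_ring)

lemma idl_rmult: "x \<in> I \<Longrightarrow> r \<in> Cv V \<Longrightarrow> x * r \<in> I"
  using I_r_closed by (simp add: carrier_mpoly_ring)

lemma cls_eq_iff: "p \<in> Cv V \<Longrightarrow> q \<in> Cv V \<Longrightarrow>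
   cls (mpoly_ring V) I p = cls (mpoly_ring V) I q \<longleftrightarrow> p - q \<in> I"
proof -
  assume p: "p \<in> Cv V" and q: "q \<in> Cv V"
  have R: "ring (mpoly_ring V)" using cring_mpoly_ring cring.axioms(1) by blast
  have c: "p \<in> carrier (mpoly_ring V)" "q \<in> carrier (mpoly_ring V)"
    using p q by (simp_all add: carrier_mpoly_ring)
  have m: "(p \<in> I +>\<^bsub>mpoly_ring V\<^esub> q) = (p - q \<in> I)"
    using a_rcos_module_minus[OF R c(2,1)] p q by simp
  show ?thesis
  proof
    assume "cls (mpoly_ring V) I p = cls (mpoly_ring V) I q"
    then have "p \<in> I +>\<^bsub>mpoly_ring V\<^esub> q"
      using a_rcos_self[OF c(1)] by (simp add: cls_def)
    then show "p - q \<in> I" using m by simp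
  next
    assume "p - q \<in> I"
    then have "p \<in> I +>\<^bsub>mpoly_ring V\<^esub> q" using m by simp
    then show "cls (mpoly_ring V) I p = cls (mpoly_ring V) I q"
      using a_repr_independence'[OF _ c(2)] by (simp add: cls_def)
  qed
qed

lemma cls_zero_iff: "p \<in> Cv V \<Longrightarrow> cls (mpoly_ring V) I p = I \<longleftrightarrow> p \<in> I"
proof -
  assume p: "p \<in> Cv V"
  have R: "ring (mpoly_ring V)" using cring_mpoly_ring cring.axioms(1) by blast
  have z: "cls (mpoly_ring V) I 0 = I"
    unfolding cls_def using ring.a_rcos_zero[OF R idl idl_0] .
  have "cls (mpoly_ring V) I p = cls (mpoly_ring V) I 0 \<longleftrightarrow> p - 0 \<in> I"
    by (rule cls_eq_iff[OF p Cv_0])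
  then show ?thesis unfolding z by simp
qed

lemma cls_hom: "cls (mpoly_ring V) I \<in> ring_hom (mpoly_ring V) (mpoly_ring V Quot I)"
  unfolding cls_def by (rule rcos_ring_hom)

lemma quot_cring: "cring (mpoly_ring V Quot I)"
  by (rule quotient_is_cring[OF cring_mpoly_ring])

end


definition ysum :: "nat \<Rightarrow> nat \<Rightarrow> 'e ray mpoly" where
  "ysum m i = (\<Sum>S\<in>{S. S \<subset> groundE m \<and> i \<notin> S}. mvar (RS S))"

definition gsum :: "nat \<Rightarrow> nat \<Rightarrow> gen mpoly" where
  "gsum m i = (\<Sum>S\<in>{S. S \<subset> groundE m \<and> i \<notin> S}. mvar (GX S))"

definition sa :: "nat \<Rightarrow> gen \<Rightarrow> 'e ray mpoly" where
  "sa m g = (case g of GX S \<Rightarrow> mvar (RS S) | GY i \<Rightarrow> ysum m i)"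

definition sb :: "('e \<Rightarrow> nat) \<Rightarrow> 'e ray \<Rightarrow> gen mpoly" where
  "sb \<pi> r = (case r of RS S \<Rightarrow> mvar (GX S) | RE j \<Rightarrow> mvar (GY (\<pi> j)))"

lemma sa_simps[simp]: "sa m (GX S) = mvar (RS S)" "sa m (GY i) = ysum m i"
  by (simp_all add: sa_def)
lemma sb_simps[simp]: "sb \<pi> (RS S) = mvar (GX S)" "sb \<pi> (RE j) = mvar (GY (\<pi> j))"
  by (simp_all add: sb_def)

lemma finite_groundE[simp]: "finite (groundE m)" by (simp add: groundE_def)
lemma finite_PS[simp]: "finite {S. S \<subset> groundE m}"
  by (rule finite_subset[of _ "Pow (groundE m)"]) auto
lemma finite_PS'[simp]: "finite {S. S \<subset> groundE m \<and> P S}"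
  by (rule finite_subset[OF _ finite_PS]) auto

locale polystell =
  fixes m :: nat and a :: "nat \<Rightarrow> nat" and Et :: "'e set" and \<pi> :: "'e \<Rightarrow> nat"
  assumes finEt: "finite Et"
    and img: "\<pi> ` Et \<subseteq> groundE m"
    and card_fib: "\<forall>i\<in>groundE m. card {j\<in>Et. \<pi> j = i} = a i"
begin

abbreviation "C \<equiv> chow_poly m Et"
abbreviation "P \<equiv> pres_poly m"
abbreviation "IC \<equiv> chow_ideal m Et \<pi>"
abbreviation "IP \<equiv> pres_ideal m a"
abbreviation "RV \<equiv> rays m Et"
abbreviation "PV \<equiv> pres_vars m"

lemma C_def': "C = mpoly_ring RV" by (simp add: chow_poly_def)
lemma P_def': "P = mpoly_ring PV" by (simp add: pres_poly_def)

lemma finite_rays: "finite RV"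
  using finEt by (simp add: rays_def)

lemma RS_in_rays[simp]: "RS S \<in> RV \<longleftrightarrow> S \<subset> groundE m"
  by (auto simp: rays_def)
lemma RE_in_rays[simp]: "RE j \<in> RV \<longleftrightarrow> j \<in> Et"
  by (auto simp: rays_def)
lemma GX_in_vars[simp]: "GX S \<in> PV \<longleftrightarrow> S \<subset> groundE m"
  by (auto simp: pres_vars_def)
lemma GY_in_vars[simp]: "GY i \<in> PV \<longleftrightarrow> i \<in> groundE m"
  by (auto simp: pres_vars_def)

lemma ysum_Cv[simp]: "ysum m i \<in> Cv RV"
  unfolding ysum_def by (rule Cv_sum) (rule Cv_mvar, simp)
lemma gsum_Cv[simp]: "gsum m i \<in> Cv PV"
  unfolding gsum_def by (rule Cv_sum) (rule Cv_mvar, simp)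

lemma sa_Cv: "g \<in> PV \<Longrightarrow> sa m g \<in> Cv RV"
  by (cases g) auto
lemma sb_Cv: "r \<in> RV \<Longrightarrow> sb \<pi> r \<in> Cv PV"
  using img by (cases r) auto

lemma SR_gens_Cv: "SR_gens m Et \<pi> \<subseteq> Cv RV"
  by (auto simp: SR_gens_def intro!: Cv_prod Cv_mvar)
lemma lin_gens_Cv: "lin_gens m Et \<pi> \<subseteq> Cv RV"
  by (auto simp: lin_gens_def intro!: Cv_sum Cv_diff Cv_mvar)
lemma pres_gens_Cv: "pres_gens m a \<subseteq> Cv PV"
  by (auto simp: pres_gens_def intro!: Cv_sum Cv_diff Cv_mvar Cv_mult Cv_power)

lemma ringC: "ring C" using cring_mpoly_ring cring.axioms(1) C_def' by metis
lemma ringP: "ring P" using cring_mpoly_ring cring.axioms(1) P_def' by metis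

lemma IC_ideal: "ideal IC (mpoly_ring RV)"
  unfolding chow_ideal_def C_def'[symmetric]
  using ring.genideal_ideal[OF ringC] SR_gens_Cv lin_gens_Cv by (simp add: C_def' carrier_mpoly_ring)
lemma IP_ideal: "ideal IP (mpoly_ring PV)"
  unfolding pres_ideal_def P_def'[symmetric]
  using ring.genideal_ideal[OF ringP] pres_gens_Cv by (simp add: P_def' carrier_mpoly_ring)

lemma gens_IC: "SR_gens m Et \<pi> \<union> lin_gens m Et \<pi> \<subseteq> IC"
  unfolding chow_ideal_def
  using ring.genideal_self[OF ringC, of "SR_gens m Et \<pi> \<union> lin_gens m Et \<pi>"] SR_gens_Cv lin_gens_Cv
  by (simp add: C_def' carrier_mpoly_ring)
lemma gens_IP: "pres_gens m a \<subseteq> IP"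
  unfolding pres_ideal_def
  using ring.genideal_self[OF ringP, of "pres_gens m a"] pres_gens_Cv by (simp add: P_def' carrier_mpoly_ring)

lemma lin_in_IC: "j \<in> Et \<Longrightarrow> mvar (RE j) - ysum m (\<pi> j) \<in> IC"
  using gens_IC unfolding lin_gens_def ysum_def by blast

lemma gsum_in_IP: "i \<in> groundE m \<Longrightarrow> mvar (GY i) - gsum m i \<in> IP"
  using gens_IP unfolding pres_gens_def gsum_def by blast

end

context polystell begin

lemma is_coneE:
  assumes "is_cone m Et \<pi> \<sigma>"
  obtains I F where "I \<subseteq> Et" "\<forall>F'\<in>F. F' \<subset> groundE m"
    "\<forall>F'\<in>F. \<forall>G\<in>F. F' \<subseteq> G \<or> G \<subseteq> F'"
    "\<sigma> = RS ` F \<union> RE ` I"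
    "\<forall>A. A \<subseteq> groundE m \<longrightarrow> {j\<in>Et. \<pi> j \<in> A} \<subseteq> I \<longrightarrow>
              A \<subseteq> (if F = {} then groundE m else \<Inter>F)"
  using assms unfolding is_cone_def
  apply (elim exE conjE)
  apply (rule that)
      apply assumption+
  done

lemma idlC: "ideal IC (mpoly_ring RV)" by (rule IC_ideal)

lemma pair_SR: assumes "S1 \<subset> groundE m" "S2 \<subset> groundE m" "\<not> S1 \<subseteq> S2" "\<not> S2 \<subseteq> S1"
  shows "mvar (RS S1) * mvar (RS S2) \<in> IC"
proof -
  have nc: "\<not> is_cone m Et \<pi> {RS S1, RS S2}"
  proof
    assume "is_cone m Et \<pi> {RS S1, RS S2}"
    then obtain I F where "I \<subseteq> Et" "\<forall>F'\<in>F. F' \<subset> groundE m"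
      and ch: "\<forall>F'\<in>F. \<forall>G\<in>F. F' \<subseteq> G \<or> G \<subseteq> F'"
      and eq: "{RS S1, RS S2} = RS ` F \<union> RE ` I"
      and "\<forall>A. A \<subseteq> groundE m \<longrightarrow> {j\<in>Et. \<pi> j \<in> A} \<subseteq> I \<longrightarrow>
              A \<subseteq> (if F = {} then groundE m else \<Inter>F)"
      by (rule is_coneE)
    have "RS S1 \<in> RS ` F \<union> RE ` I" "RS S2 \<in> RS ` F \<union> RE ` I" using eq by blast+
    then have "S1 \<in> F" "S2 \<in> F" by auto
    then show False using ch assms(3,4) by blast
  qed
  have "{RS S1, RS S2} \<subseteq> RV" using assms(1,2) by simp
  then have "prod mvar {RS S1, RS S2} \<in> SR_gens m Et \<pi>"
    using nc unfolding SR_gens_def by blast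
  moreover have "S1 \<noteq> S2" using assms(3) by blast
  ultimately show ?thesis using gens_IC by auto
qed

lemma fib_SR: assumes S: "S \<subset> groundE m" and i: "i \<in> groundE m" "i \<notin> S"
  shows "mvar (RS S) * (\<Prod>j\<in>{j\<in>Et. \<pi> j = i}. mvar (RE j)) \<in> IC"
proof -
  let ?J = "{j\<in>Et. \<pi> j = i}"
  let ?\<sigma> = "insert (RS S) (RE ` ?J)"
  have nc: "\<not> is_cone m Et \<pi> ?\<sigma>"
  proof
    assume "is_cone m Et \<pi> ?\<sigma>"
    then obtain I F where "I \<subseteq> Et" "\<forall>F'\<in>F. F' \<subset> groundE m"
      "\<forall>F'\<in>F. \<forall>G\<in>F. F' \<subseteq> G \<or> G \<subseteq> F'"
      and eq: "?\<sigma> = RS ` F \<union> RE ` I"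
      and A: "\<forall>A. A \<subseteq> groundE m \<longrightarrow> {j\<in>Et. \<pi> j \<in> A} \<subseteq> I \<longrightarrow>
              A \<subseteq> (if F = {} then groundE m else \<Inter>F)"
      by (rule is_coneE)
    have "RS S \<in> RS ` F \<union> RE ` I" using eq by blast
    then have SF: "S \<in> F" by auto
    have "?J \<subseteq> I"
    proof
      fix j assume "j \<in> ?J"
      then have "RE j \<in> RS ` F \<union> RE ` I" using eq by blast
      then show "j \<in> I" by auto
    qed
    then have "{j\<in>Et. \<pi> j \<in> {i}} \<subseteq> I" by simp
    then have "{i} \<subseteq> (if F = {} then groundE m else \<Inter>F)" using A i(1) by blast
    moreover have "F \<noteq> {}" using SF by blast
    ultimately have "i \<in> S" using SF by auto
    then show False using i(2) by blast
  qed
  have "?\<sigma> \<subseteq> RV" using S by auto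
  then have "prod mvar ?\<sigma> \<in> SR_gens m Et \<pi>"
    using nc unfolding SR_gens_def by blast
  moreover have "prod mvar ?\<sigma> = mvar (RS S) * (\<Prod>j\<in>?J. mvar (RE j))"
  proof -
    have "finite (RE ` ?J)" using finEt by simp
    then have "prod mvar ?\<sigma> = mvar (RS S) * prod mvar (RE ` ?J)" by (simp add: image_iff)
    also have "prod mvar (RE ` ?J) = (\<Prod>j\<in>?J. mvar (RE j))"
      by (subst prod.reindex) (auto simp: inj_on_def)
    finally show ?thesis .
  qed
  ultimately show ?thesis using gens_IC by auto
qed

lemma fib_cong: assumes "finite J" "J \<subseteq> {j\<in>Et. \<pi> j = i}"
  shows "(\<Prod>j\<in>J. mvar (RE j)) - ysum m i ^ card J \<in> IC"
  using assms
proof (induction J rule: finite_induct)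
  case empty
  then show ?case using idl_0[OF idlC] by simp
next
  case (insert j J)
  have j: "j \<in> Et" "\<pi> j = i" using insert.prems by auto
  have IH: "(\<Prod>j\<in>J. mvar (RE j)) - ysum m i ^ card J \<in> IC" using insert by auto
  have Pc: "(\<Prod>j\<in>J. mvar (RE j)) \<in> Cv RV" using insert.prems by (intro Cv_prod Cv_mvar) auto
  have "(\<Prod>j\<in>insert j J. mvar (RE j)) - ysum m i ^ card (insert j J)
      = mvar (RE j) * ((\<Prod>j\<in>J. mvar (RE j)) - ysum m i ^ card J)
        + (mvar (RE j) - ysum m (\<pi> j)) * ysum m i ^ card J"
    using insert j by (simp add: algebra_simps)
  also have "\<dots> \<in> IC"
    by (intro idl_add[OF idlC] idl_lmult[OF idlC] idl_rmult[OF idlC] IH lin_in_IC j Cv_mvar Cv_power ysum_Cv) (simp add: j)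
  finally show ?case .
qed

lemma sa_gens: "g \<in> pres_gens m a \<Longrightarrow> subst (sa m) g \<in> IC"
proof -
  assume "g \<in> pres_gens m a"
  then consider
      (pair) S1 S2 where "g = mvar (GX S1) * mvar (GX S2)" "S1 \<subset> groundE m" "S2 \<subset> groundE m"
                          "\<not> S1 \<subseteq> S2" "\<not> S2 \<subseteq> S1"
    | (fib) S i where "g = mvar (GX S) * mvar (GY i) ^ a i" "S \<subset> groundE m" "i \<in> groundE m" "i \<notin> S"
    | (lin) i where "g = mvar (GY i) - (\<Sum>S\<in>{S. S \<subset> groundE m \<and> i \<notin> S}. mvar (GX S))" "i \<in> groundE m"
    unfolding pres_gens_def by blast
  then show ?thesis
  proof cases
    case pair
    then show ?thesis using pair_SR by simp
  next
    case fib
    have cJ: "card {j\<in>Et. \<pi> j = i} = a i" using card_fib fib(3) by blast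
    have fJ: "finite {j\<in>Et. \<pi> j = i}" using finEt by simp
    have d: "(\<Prod>j\<in>{j\<in>Et. \<pi> j = i}. mvar (RE j)) - ysum m i ^ a i \<in> IC"
      using fib_cong[OF fJ order_refl] cJ by simp
    have x: "mvar (RS S) \<in> Cv RV" using fib(2) by simp
    have "mvar (RS S) * ysum m i ^ a i
        = mvar (RS S) * (\<Prod>j\<in>{j\<in>Et. \<pi> j = i}. mvar (RE j))
          - mvar (RS S) * ((\<Prod>j\<in>{j\<in>Et. \<pi> j = i}. mvar (RE j)) - ysum m i ^ a i)"
      by (simp add: algebra_simps)
    also have "\<dots> \<in> IC"
      by (intro idl_diff[OF idlC] idl_lmult[OF idlC] fib_SR fib d x)
    finally show ?thesis using fib(1) by simp
  next
    case lin
    then show ?thesis using idl_0[OF idlC] by (simp add: ysum_def)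
  qed
qed


lemma idlP: "ideal IP (mpoly_ring PV)" by (rule IP_ideal)

lemma pg_pair: "S1 \<subset> groundE m \<Longrightarrow> S2 \<subset> groundE m \<Longrightarrow> \<not> S1 \<subseteq> S2 \<Longrightarrow> \<not> S2 \<subseteq> S1 \<Longrightarrow>
  mvar (GX S1) * mvar (GX S2) \<in> IP"
  apply (rule subsetD[OF gens_IP])
  unfolding pres_gens_def
  apply (rule UnI1, rule UnI1)
  apply (rule CollectI)
  apply (rule exI[of _ S1], rule exI[of _ S2])
  apply simp
  done

lemma pg_fib: "S \<subset> groundE m \<Longrightarrow> i \<in> groundE m \<Longrightarrow> i \<notin> S \<Longrightarrow>
  mvar (GX S) * mvar (GY i) ^ a i \<in> IP"
  apply (rule subsetD[OF gens_IP])
  unfolding pres_gens_def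
  apply (rule UnI1, rule UnI2)
  apply (rule CollectI)
  apply (rule exI[of _ S], rule exI[of _ i])
  apply simp
  done

lemma sb_prod: "finite \<tau> \<Longrightarrow> subst (sb \<pi>) (prod mvar \<tau>) = (\<Prod>r\<in>\<tau>. sb \<pi> r)"
  by simp

lemma sb_SR: assumes sub: "\<sigma> \<subseteq> RV" and nc: "\<not> is_cone m Et \<pi> \<sigma>"
  shows "subst (sb \<pi>) (prod mvar \<sigma>) \<in> IP"
proof -
  define F where "F = {S. RS S \<in> \<sigma>}"
  define I where "I = {j. RE j \<in> \<sigma>}"
  have fin: "finite \<sigma>" using finite_subset[OF sub finite_rays] .
  have eq: "\<sigma> = RS ` F \<union> RE ` I"
  proof
    show "\<sigma> \<subseteq> RS ` F \<union> RE ` I"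
    proof
      fix r assume "r \<in> \<sigma>" then show "r \<in> RS ` F \<union> RE ` I"
        by (cases r) (auto simp: F_def I_def)
    qed
  qed (auto simp: F_def I_def)
  have IE: "I \<subseteq> Et" using sub by (auto simp: I_def)
  have FE: "\<forall>F'\<in>F. F' \<subset> groundE m" unfolding F_def using sub RS_in_rays by blast
  have key: "\<not> ((\<forall>F'\<in>F. \<forall>G\<in>F. F' \<subseteq> G \<or> G \<subseteq> F') \<and>
        (\<forall>A. A \<subseteq> groundE m \<longrightarrow> {j\<in>Et. \<pi> j \<in> A} \<subseteq> I \<longrightarrow>
              A \<subseteq> (if F = {} then groundE m else \<Inter>F)))"
  proof
    assume h: "(\<forall>F'\<in>F. \<forall>G\<in>F. F' \<subseteq> G \<or> G \<subseteq> F') \<and>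
        (\<forall>A. A \<subseteq> groundE m \<longrightarrow> {j\<in>Et. \<pi> j \<in> A} \<subseteq> I \<longrightarrow>
              A \<subseteq> (if F = {} then groundE m else \<Inter>F))"
    have "is_cone m Et \<pi> \<sigma>"
      unfolding is_cone_def
      apply (rule exI[of _ I], rule exI[of _ F])
      using IE FE eq h by blast
    then show False using nc by blast
  qed
  have split: "subst (sb \<pi>) (prod mvar \<sigma>) = subst (sb \<pi>) (prod mvar \<tau>) * subst (sb \<pi>) (prod mvar (\<sigma> - \<tau>))"
    if "\<tau> \<subseteq> \<sigma>" for \<tau>
    using prod.subset_diff[OF that fin, of mvar] by (simp add: mult.commute)
  have rest: "subst (sb \<pi>) (prod mvar (\<sigma> - \<tau>)) \<in> Cv PV" for \<tau>
    by (rule subst_Cv[OF sb_Cv]) (use sub in \<open>auto intro!: Cv_prod Cv_mvar\<close>)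
  from key consider
      (pair) S1 S2 where "S1 \<in> F" "S2 \<in> F" "\<not> S1 \<subseteq> S2" "\<not> S2 \<subseteq> S1"
    | (fib) A where "A \<subseteq> groundE m" "{j\<in>Et. \<pi> j \<in> A} \<subseteq> I" "\<not> A \<subseteq> (if F = {} then groundE m else \<Inter>F)"
    by blast
  then show ?thesis
  proof cases
    case pair
    let ?\<tau> = "{RS S1, RS S2}"
    have t: "?\<tau> \<subseteq> \<sigma>" using pair by (auto simp: F_def)
    have ne: "S1 \<noteq> S2" using pair by blast
    have "subst (sb \<pi>) (prod mvar ?\<tau>) = mvar (GX S1) * mvar (GX S2)" using ne by simp
    also have "\<dots> \<in> IP" using pair FE by (intro pg_pair) auto
    finally show ?thesis using split[OF t] idl_rmult[OF idlP _ rest] by simp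
  next
    case fib
    have Fne: "F \<noteq> {}" using fib by auto
    then obtain i where iA: "i \<in> A" and "i \<notin> \<Inter>F" using fib(3) by auto
    then obtain S where SF: "S \<in> F" and iS: "i \<notin> S" by blast
    have iE: "i \<in> groundE m" using iA fib(1) by blast
    let ?J = "{j\<in>Et. \<pi> j = i}"
    have JI: "?J \<subseteq> I" using fib(2) iA by blast
    let ?\<tau> = "insert (RS S) (RE ` ?J)"
    have t: "?\<tau> \<subseteq> \<sigma>" using SF JI by (auto simp: F_def I_def)
    have finJ: "finite ?J" using finEt by simp
    have "subst (sb \<pi>) (prod mvar ?\<tau>) = mvar (GX S) * (\<Prod>r\<in>RE ` ?J. sb \<pi> r)"
      using finJ by (simp add: image_iff)
    also have "(\<Prod>r\<in>RE ` ?J. sb \<pi> r) = (\<Prod>j\<in>?J. mvar (GY (\<pi> j)))"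
      by (subst prod.reindex) (auto simp: inj_on_def)
    also have "\<dots> = (\<Prod>j\<in>?J. mvar (GY i))" by (rule prod.cong) auto
    also have "\<dots> = mvar (GY i) ^ a i" using card_fib iE by simp
    finally have "subst (sb \<pi>) (prod mvar ?\<tau>) = mvar (GX S) * mvar (GY i) ^ a i" .
    also have "\<dots> \<in> IP" using SF FE iE iS by (intro pg_fib) auto
    finally show ?thesis using split[OF t] idl_rmult[OF idlP _ rest] by simp
  qed
qed

lemma sb_lin: "g \<in> lin_gens m Et \<pi> \<Longrightarrow> subst (sb \<pi>) g \<in> IP"
proof -
  assume "g \<in> lin_gens m Et \<pi>"
  then obtain k where k: "k \<in> Et" and g: "g = mvar (RE k) - (\<Sum>S\<in>{S. S \<subset> groundE m \<and> \<pi> k \<notin> S}. mvar (RS S))"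
    unfolding lin_gens_def by blast
  have "subst (sb \<pi>) g = mvar (GY (\<pi> k)) - gsum m (\<pi> k)" by (simp add: g gsum_def)
  also have "\<dots> \<in> IP" using gsum_in_IP img k by blast
  finally show ?thesis .
qed


end


context polystell begin
lemma sa_subst_Cv: "p \<in> Cv PV \<Longrightarrow> subst (sa m) p \<in> Cv RV"
  by (rule subst_Cv[of PV "sa m"]) (auto intro: sa_Cv)
lemma sb_subst_Cv: "p \<in> Cv RV \<Longrightarrow> subst (sb \<pi>) p \<in> Cv PV"
  by (rule subst_Cv[of RV "sb \<pi>"]) (auto intro: sb_Cv)

abbreviation "QC \<equiv> mpoly_ring RV Quot IC"
abbreviation "QP \<equiv> mpoly_ring PV Quot IP"

lemma QC_ring: "ring QC" using quot_cring[OF idlC] cring.axioms(1) by blast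
lemma QP_ring: "ring QP" using quot_cring[OF idlP] cring.axioms(1) by blast
lemma QP_cring: "cring QP" using quot_cring[OF idlP] .
lemma QC_cring: "cring QC" using quot_cring[OF idlC] .

lemma hC_hom: "(\<lambda>p. cls (mpoly_ring RV) IC (subst (sa m) p)) \<in> ring_hom (mpoly_ring PV) QC"
  by (rule hom_comp_subst[OF QC_ring cls_hom[OF idlC] sa_Cv])

lemma gB_hom: "(\<lambda>p. cls (mpoly_ring PV) IP (subst (sb \<pi>) p)) \<in> ring_hom (mpoly_ring RV) QP"
  by (rule hom_comp_subst[OF QP_ring cls_hom[OF idlP] sb_Cv])

lemma zero_Quot: "zero (R Quot I) = I" by (simp add: FactRing_def)

lemma IC_to_IP: "p \<in> IC \<Longrightarrow> subst (sb \<pi>) p \<in> IP"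
proof -
  assume p: "p \<in> IC"
  let ?g = "\<lambda>p. cls (mpoly_ring PV) IP (subst (sb \<pi>) p)"
  interpret G: ring_hom_ring "mpoly_ring RV" QP ?g
    by (rule ring_hom_ringI2[OF ringC[unfolded C_def'] QP_ring gB_hom])
  have K: "a_kernel (mpoly_ring RV) QP ?g = {p \<in> Cv RV. subst (sb \<pi>) p \<in> IP}"
  proof -
    have "cls (mpoly_ring PV) IP (subst (sb \<pi>) p) = IP \<longleftrightarrow> subst (sb \<pi>) p \<in> IP" if "p \<in> Cv RV" for p
      by (rule cls_zero_iff[OF idlP sb_subst_Cv[OF that]])
    then show ?thesis unfolding a_kernel_def' zero_Quot carrier_mpoly_ring by auto
  qed
  have "SR_gens m Et \<pi> \<union> lin_gens m Et \<pi> \<subseteq> a_kernel (mpoly_ring RV) QP ?g"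
  proof
    fix g assume g: "g \<in> SR_gens m Et \<pi> \<union> lin_gens m Et \<pi>"
    then have "g \<in> Cv RV" using SR_gens_Cv lin_gens_Cv by blast
    moreover have "subst (sb \<pi>) g \<in> IP"
      using g
    proof
      assume "g \<in> SR_gens m Et \<pi>"
      then obtain \<sigma> where "g = prod mvar \<sigma>" "\<sigma> \<subseteq> RV" "\<not> is_cone m Et \<pi> \<sigma>"
        unfolding SR_gens_def by blast
      then show ?thesis using sb_SR by simp
    qed (rule sb_lin)
    ultimately show "g \<in> a_kernel (mpoly_ring RV) QP ?g" unfolding K by blast
  qed
  then have "IC \<subseteq> a_kernel (mpoly_ring RV) QP ?g"
    unfolding chow_ideal_def chow_poly_def
    by (rule G.R.genideal_minimal[OF G.kernel_is_ideal])
  then show ?thesis using p K by blast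
qed

lemma IP_to_IC: "p \<in> IP \<Longrightarrow> subst (sa m) p \<in> IC"
proof -
  assume p: "p \<in> IP"
  let ?g = "\<lambda>p. cls (mpoly_ring RV) IC (subst (sa m) p)"
  interpret G: ring_hom_ring "mpoly_ring PV" QC ?g
    by (rule ring_hom_ringI2[OF ringP[unfolded P_def'] QC_ring hC_hom])
  have K: "a_kernel (mpoly_ring PV) QC ?g = {p \<in> Cv PV. subst (sa m) p \<in> IC}"
  proof -
    have "cls (mpoly_ring RV) IC (subst (sa m) p) = IC \<longleftrightarrow> subst (sa m) p \<in> IC" if "p \<in> Cv PV" for p
      by (rule cls_zero_iff[OF idlC sa_subst_Cv[OF that]])
    then show ?thesis unfolding a_kernel_def' zero_Quot carrier_mpoly_ring by auto
  qed
  have "pres_gens m a \<subseteq> a_kernel (mpoly_ring PV) QC ?g"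
  proof
    fix g assume g: "g \<in> pres_gens m a"
    then have "g \<in> Cv PV" using pres_gens_Cv by blast
    then show "g \<in> a_kernel (mpoly_ring PV) QC ?g" unfolding K using sa_gens[OF g] by blast
  qed
  then have "IP \<subseteq> a_kernel (mpoly_ring PV) QC ?g"
    unfolding pres_ideal_def pres_poly_def
    by (rule G.R.genideal_minimal[OF G.kernel_is_ideal])
  then show ?thesis using p K by blast
qed

lemma sb_ysum: "subst (sb \<pi>) (ysum m i) = gsum m i"
  by (simp add: ysum_def gsum_def)

lemma comp_P: "p \<in> Cv PV \<Longrightarrow>
  cls (mpoly_ring PV) IP (subst (sb \<pi>) (subst (sa m) p)) = cls (mpoly_ring PV) IP p"
proof -
  assume p: "p \<in> Cv PV"
  show ?thesis
  proof (rule hom_unique[OF QP_cring _ cls_hom[OF idlP] _ p])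
    show "(\<lambda>p. cls (mpoly_ring PV) IP (subst (sb \<pi>) (subst (sa m) p))) \<in> ring_hom (mpoly_ring PV) QP"
      by (rule hom_comp_subst[OF QP_ring gB_hom sa_Cv])
  next
    fix v assume v: "v \<in> PV"
    show "cls (mpoly_ring PV) IP (subst (sb \<pi>) (subst (sa m) (mvar v))) = cls (mpoly_ring PV) IP (mvar v)"
    proof (cases v)
      case (GY i)
      then have i: "i \<in> groundE m" using v by simp
      have "cls (mpoly_ring PV) IP (gsum m i) = cls (mpoly_ring PV) IP (mvar (GY i))"
        using cls_eq_iff[OF idlP gsum_Cv Cv_mvar[of "GY i"]] gsum_in_IP[OF i] i idl_uminus[OF idlP]
        by (metis GY_in_vars minus_diff_eq)
      then show ?thesis using GY by (simp add: sb_ysum)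
    qed simp
  qed
qed

lemma ysum_cong: "j \<in> Et \<Longrightarrow> cls (mpoly_ring RV) IC (ysum m (\<pi> j)) = cls (mpoly_ring RV) IC (mvar (RE j))"
  using cls_eq_iff[OF idlC ysum_Cv Cv_mvar[of "RE j"]] lin_in_IC idl_uminus[OF idlC]
  by (metis RE_in_rays minus_diff_eq)

lemma comp_C: "p \<in> Cv RV \<Longrightarrow>
  cls (mpoly_ring RV) IC (subst (sa m) (subst (sb \<pi>) p)) = cls (mpoly_ring RV) IC p"
proof -
  assume p: "p \<in> Cv RV"
  show ?thesis
  proof (rule hom_unique[OF QC_cring _ cls_hom[OF idlC] _ p])
    show "(\<lambda>p. cls (mpoly_ring RV) IC (subst (sa m) (subst (sb \<pi>) p))) \<in> ring_hom (mpoly_ring RV) QC"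
      by (rule hom_comp_subst[OF QC_ring hC_hom sb_Cv])
  next
    fix v assume v: "v \<in> RV"
    show "cls (mpoly_ring RV) IC (subst (sa m) (subst (sb \<pi>) (mvar v))) = cls (mpoly_ring RV) IC (mvar v)"
    proof (cases v)
      case (RE j)
      then have j: "j \<in> Et" using v by simp
      then show ?thesis using RE ysum_cong[OF j] by simp
    qed simp
  qed
qed


abbreviation "hC \<equiv> (\<lambda>p. cls (mpoly_ring RV) IC (subst (sa m) p))"

lemma kernel_eq: "a_kernel (mpoly_ring PV) QC hC = IP"
proof -
  have "a_kernel (mpoly_ring PV) QC hC = {p \<in> Cv PV. subst (sa m) p \<in> IC}"
  proof -
    have "cls (mpoly_ring RV) IC (subst (sa m) p) = IC \<longleftrightarrow> subst (sa m) p \<in> IC" if "p \<in> Cv PV" for p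
      by (rule cls_zero_iff[OF idlC sa_subst_Cv[OF that]])
    then show ?thesis unfolding a_kernel_def' zero_Quot carrier_mpoly_ring by auto
  qed
  also have "\<dots> = IP"
  proof
    show "IP \<subseteq> {p \<in> Cv PV. subst (sa m) p \<in> IC}"
      using idl_sub[OF idlP] IP_to_IC by blast
    show "{p \<in> Cv PV. subst (sa m) p \<in> IC} \<subseteq> IP"
    proof
      fix p assume "p \<in> {p \<in> Cv PV. subst (sa m) p \<in> IC}"
      then have p: "p \<in> Cv PV" and h: "subst (sa m) p \<in> IC" by auto
      have "subst (sb \<pi>) (subst (sa m) p) \<in> IP" by (rule IC_to_IP[OF h])
      then have "cls (mpoly_ring PV) IP (subst (sb \<pi>) (subst (sa m) p)) = IP"
        using cls_zero_iff[OF idlP sb_subst_Cv[OF sa_subst_Cv[OF p]]] by blast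
      then have "cls (mpoly_ring PV) IP p = IP" using comp_P[OF p] by simp
      then show "p \<in> IP" using cls_zero_iff[OF idlP p] by blast
    qed
  qed
  finally show ?thesis .
qed

lemma surj: "hC ` carrier (mpoly_ring PV) = carrier QC"
proof
  show "hC ` carrier (mpoly_ring PV) \<subseteq> carrier QC"
    using ring_hom_closed[OF hC_hom] by blast
  show "carrier QC \<subseteq> hC ` carrier (mpoly_ring PV)"
  proof
    fix X assume "X \<in> carrier QC"
    then obtain p where p: "p \<in> carrier (mpoly_ring RV)" and X: "X = IC +>\<^bsub>mpoly_ring RV\<^esub> p"
      unfolding FactRing_def A_RCOSETS_def' by auto
    have pc: "p \<in> Cv RV" using p by (simp add: carrier_mpoly_ring)
    have "X = hC (subst (sb \<pi>) p)" using comp_C[OF pc] X by (simp add: cls_def)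
    moreover have "subst (sb \<pi>) p \<in> carrier (mpoly_ring PV)"
      using sb_subst_Cv[OF pc] by (simp add: carrier_mpoly_ring)
    ultimately show "X \<in> hC ` carrier (mpoly_ring PV)" by blast
  qed
qed

lemma main_iso: "\<exists>\<phi>. \<phi> \<in> ring_iso QP QC \<and>
   (\<forall>x\<in>Cv PV. \<phi> (cls (mpoly_ring PV) IP x) = cls (mpoly_ring RV) IC (subst (sa m) x))"
proof -
  interpret H: ring_hom_ring "mpoly_ring PV" QC hC
    by (rule ring_hom_ringI2[OF ringP[unfolded P_def'] QC_ring hC_hom])
  have iso: "(\<lambda>X. the_elem (hC ` X)) \<in> ring_iso QP QC"
    using H.FactRing_iso_set[OF surj] unfolding kernel_eq .
  have "\<forall>x\<in>Cv PV. the_elem (hC ` (cls (mpoly_ring PV) IP x)) = hC x"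
  proof
    fix x assume "x \<in> Cv PV"
    then have "x \<in> carrier (mpoly_ring PV)" by (simp add: carrier_mpoly_ring)
    from H.the_elem_simp[OF this, unfolded kernel_eq] show "the_elem (hC ` (cls (mpoly_ring PV) IP x)) = hC x"
      by (simp add: cls_def)
  qed
  with iso show ?thesis by blast
qed

end

theorem main_thm:
  fixes m :: nat and a :: "nat \<Rightarrow> nat" and Et :: "'e set" and \<pi> :: "'e \<Rightarrow> nat"
  assumes "finite Et"
    and "\<pi> ` Et \<subseteq> groundE m"
    and "\<forall>i\<in>groundE m. card {j\<in>Et. \<pi> j = i} = a i"
  shows "(\<forall>i\<in>groundE m. \<forall>j\<in>Et. \<forall>j'\<in>Et. \<pi> j = i \<longrightarrow> \<pi> j' = i \<longrightarrow>
            cls (chow_poly m Et) (chow_ideal m Et \<pi>) (mvar (RE j))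
          = cls (chow_poly m Et) (chow_ideal m Et \<pi>) (mvar (RE j')))
       \<and> (\<exists>\<phi>. \<phi> \<in> ring_iso (pres_ring m a) (chow_ring m Et \<pi>)
            \<and> (\<forall>S. S \<subset> groundE m \<longrightarrow>
                  \<phi> (cls (pres_poly m) (pres_ideal m a) (mvar (GX S)))
                = cls (chow_poly m Et) (chow_ideal m Et \<pi>) (mvar (RS S)))
            \<and> (\<forall>i\<in>groundE m. \<forall>j\<in>Et. \<pi> j = i \<longrightarrow>
                  \<phi> (cls (pres_poly m) (pres_ideal m a) (mvar (GY i)))
                = cls (chow_poly m Et) (chow_ideal m Et \<pi>) (mvar (RE j))))"
proof -
  interpret polystell m a Et \<pi> using assms by unfold_locales
  have part1: "\<forall>i\<in>groundE m. \<forall>j\<in>Et. \<forall>j'\<in>Et. \<pi> j = i \<longrightarrow> \<pi> j' = i \<longrightarrow>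
            cls (mpoly_ring RV) IC (mvar (RE j)) = cls (mpoly_ring RV) IC (mvar (RE j'))"
    using ysum_cong by metis
  obtain \<phi> where iso: "\<phi> \<in> ring_iso QP QC"
    and ph: "\<forall>x\<in>Cv PV. \<phi> (cls (mpoly_ring PV) IP x) = cls (mpoly_ring RV) IC (subst (sa m) x)"
    using main_iso by blast
  have gx: "\<forall>S. S \<subset> groundE m \<longrightarrow>
         \<phi> (cls (mpoly_ring PV) IP (mvar (GX S))) = cls (mpoly_ring RV) IC (mvar (RS S))"
    using ph by simp
  have gy: "\<forall>i\<in>groundE m. \<forall>j\<in>Et. \<pi> j = i \<longrightarrow>
         \<phi> (cls (mpoly_ring PV) IP (mvar (GY i))) = cls (mpoly_ring RV) IC (mvar (RE j))"
    using ph ysum_cong by auto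
  show ?thesis
    unfolding pres_ring_def chow_ring_def pres_poly_def chow_poly_def
    using part1 iso gx gy by blast
qed


theorem corollary2p5:
  fixes m :: nat and a :: "nat \<Rightarrow> nat" and Et :: "'e set" and \<pi> :: "'e \<Rightarrow> nat"
  assumes "finite Et"
    and "\<pi> ` Et \<subseteq> groundE m"
    and "\<forall>i\<in>groundE m. card {j\<in>Et. \<pi> j = i} = a i"
  shows "(\<forall>i\<in>groundE m. \<forall>j\<in>Et. \<forall>j'\<in>Et. \<pi> j = i \<longrightarrow> \<pi> j' = i \<longrightarrow>
            cls (chow_poly m Et) (chow_ideal m Et \<pi>) (mvar (RE j))
          = cls (chow_poly m Et) (chow_ideal m Et \<pi>) (mvar (RE j')))
       \<and> (\<exists>\<phi>. \<phi> \<in> ring_iso (pres_ring m a) (chow_ring m Et \<pi>)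
            \<and> (\<forall>S. S \<subset> groundE m \<longrightarrow>
                  \<phi> (cls (pres_poly m) (pres_ideal m a) (mvar (GX S)))
                = cls (chow_poly m Et) (chow_ideal m Et \<pi>) (mvar (RS S)))
            \<and> (\<forall>i\<in>groundE m. \<forall>j\<in>Et. \<pi> j = i \<longrightarrow>
                  \<phi> (cls (pres_poly m) (pres_ideal m a) (mvar (GY i)))
                = cls (chow_poly m Et) (chow_ideal m Et \<pi>) (mvar (RE j))))"
    using main_thm[OF assms] .

end
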